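(* Let $(S,V)$ be a complete semiring-semimodule pair, let $S'\subseteq S$ contain $0$ and $1$, let $n\ge1$, let $\Gamma$ be an alphabet, and let $M\in (S'^{n\times n})^{\Gamma^*\times\Gamma^*}$ be a pushdown transition matrix. Then for all $0\le l\le n$, the family $(z_p)_{p\in\Gamma}$ with $z_p=(M^{\omega,l})_p\in V^n$ is a solution of the linear system $$z_p=\sum_{p'\in\Gamma}(A_M)_{p,p'}\,z_{p'},\qquad p\in\Gamma.$$
   Context: A complete semiring-semimodule pair $(S,V)$ (in the sense of Ésik and Kuich, "Modern Automata Theory") consists of a complete starsemiring $S$ (arbitrary sums with infinite associativity/commutativity/distributivity laws, star $s^*=\sum_{j\ge0}s^j$) and a complete $S$-semimodule $V$, with infinite products $\prod_{j\ge1}s_j\in V$ of sequences in $S$ satisfying the axioms of that framework. $M\in (S'^{n\times n})^{\Gamma^*\times\Gamma^*}$ is a $\Gamma^*\times\Gamma^*$ matrix with $n\times n$ blocks over $S'$; it is a pushdown transition matrix if (i) for each $p\in\Gamma$ only finitely many blocks $M_{p,\pi}$ are nonzero, and (ii) $M_{\pi_1,\pi_2}=M_{p,\pi}$ if $\pi_1=p\pi'$, $\pi_2=\pi\pi'$ for some $p\in\Gamma$, $\pi,\pi'\in\Gamma^*$, and $0$ otherwise. $M^*=\sum_{m\ge0}M^m$ with blocks $(M^* )_{\pi,\pi'}$. Let $P_l=\{(j_1,j_2,\dots)\in\{1,\dots,n\}^\omega\mid j_t\le l\text{ for infinitely many }t\}$; $M^{\omega,l}\in (V^n)^{\Gamma^*}$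 is given by $((M^{\omega,l})_\pi)_i=\sum_{\pi_1,\pi_2,\ldots\in\Gamma^*}\sum_{(j_1,j_2,\ldots)\in P_l}(M_{\pi,\pi_1})_{i,j_1}(M_{\pi_1,\pi_2})_{j_1,j_2}\cdots$ (sum of weights of infinite paths from $(\pi,i)$ in the graph on $\Gamma^*\times\{1,\dots,n\}$ with adjacency matrix $M$ that visit states $\le l$ infinitely often). For $p,p'\in\Gamma$, $$(A_M)_{p,p'}=\sum_{\substack{\pi=p_1\dots p_k\in\Gamma^+,\ 1\le j\le k\\ p_j=p'}}M_{p,\pi}\,(M^* )_{p_1,\epsilon}\cdots(M^* )_{p_{j-1},\epsilon}\in S^{n\times n}.$$ *)

theory Defs
  imports Main
begin

text \<open>Complete sums are required for all
families indexed by subsets of U (continuum many indices, closed under countable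
products); families indexed by other types are transported into U along an
injection (the result does not depend on the injection, by the partition axiom).\<close>

type_synonym U = "nat \<Rightarrow> nat"

definition gsum :: "((U \<Rightarrow> 'a) \<Rightarrow> U set \<Rightarrow> 'a) \<Rightarrow> ('j \<Rightarrow> 'a) \<Rightarrow> 'j set \<Rightarrow> 'a" where
  "gsum Sm f I = (let e = (SOME e :: 'j \<Rightarrow> U. inj_on e I)
                  in Sm (\<lambda>u. f (inv_into I e u)) (e ` I))"

definition complete_sum :: "((U \<Rightarrow> 'a::comm_monoid_add) \<Rightarrow> U set \<Rightarrow> 'a) \<Rightarrow> bool" where
  "complete_sum Sm \<longleftrightarrow>
     (\<forall>f g I. (\<forall>i\<in>I. f i = g i) \<longrightarrow> Sm f I = Sm g I) \<and>
     (\<forall>f. Sm f {} = 0) \<and>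
     (\<forall>f i. Sm f {i} = f i) \<and>
     (\<forall>f i j. i \<noteq> j \<longrightarrow> Sm f {i, j} = f i + f j) \<and>
     (\<forall>f I J (K :: U \<Rightarrow> U set).
        (\<Union>j\<in>J. K j) = I \<and> (\<forall>j\<in>J. \<forall>j'\<in>J. j \<noteq> j' \<longrightarrow> K j \<inter> K j' = {})
        \<longrightarrow> Sm (\<lambda>j. Sm f (K j)) J = Sm f I)"

text \<open>Sequences s_1, s_2, ... are represented as s 0, s 1, ...\<close>
definition complete_ss_pair ::
  "((U \<Rightarrow> 's::{semiring_0,monoid_mult}) \<Rightarrow> U set \<Rightarrow> 's) \<Rightarrow> ('s \<Rightarrow> 'v::comm_monoid_add \<Rightarrow> 'v)
   \<Rightarrow> ((U \<Rightarrow> 'v) \<Rightarrow> U set \<Rightarrow> 'v) \<Rightarrow> ((nat \<Rightarrow> 's) \<Rightarrow> 'v) \<Rightarrow> bool" where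
  "complete_ss_pair ssum act vsum iprod \<longleftrightarrow>
     \<comment> \<open>complete semiring\<close>
     complete_sum ssum \<and>
     (\<forall>c f I. ssum (\<lambda>i. c * f i) I = c * ssum f I) \<and>
     (\<forall>c f I. ssum (\<lambda>i. f i * c) I = ssum f I * c) \<and>
     \<comment> \<open>semimodule\<close>
     (\<forall>s1 s2 v. act (s1 + s2) v = act s1 v + act s2 v) \<and>
     (\<forall>s v1 v2. act s (v1 + v2) = act s v1 + act s v2) \<and>
     (\<forall>s1 s2 v. act (s1 * s2) v = act s1 (act s2 v)) \<and>
     (\<forall>v. act 1 v = v) \<and>
     (\<forall>v. act 0 v = 0) \<and>
     (\<forall>s. act s 0 = 0) \<and>
     \<comment> \<open>complete semimodule\<close>
     complete_sum vsum \<and>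
     (\<forall>f I v. act (ssum f I) v = vsum (\<lambda>i. act (f i) v) I) \<and>
     (\<forall>s g I. act s (vsum g I) = vsum (\<lambda>i. act s (g i)) I) \<and>
     \<comment> \<open>infinite product axioms\<close>
     (\<forall>s. iprod s = act (s 0) (iprod (\<lambda>j. s (Suc j)))) \<and>
     (\<forall>s (m :: nat \<Rightarrow> nat). m 0 = 0 \<and> strict_mono m \<longrightarrow>
        iprod s = iprod (\<lambda>j. prod_list (map s [m j..<m (Suc j)]))) \<and>
     (\<forall>(I :: nat \<Rightarrow> U set) (s :: nat \<Rightarrow> U \<Rightarrow> 's).
        iprod (\<lambda>j. ssum (s j) (I j)) =
        gsum vsum (\<lambda>f. iprod (\<lambda>j. s j (f j))) {f. \<forall>j. f j \<in> I j})"

text \<open>n x n matrices over S: functions nat => nat => S, indices in {1..n}.\<close>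
definition mat_mult :: "nat \<Rightarrow> (nat \<Rightarrow> nat \<Rightarrow> 's::semiring_0) \<Rightarrow> (nat \<Rightarrow> nat \<Rightarrow> 's) \<Rightarrow> nat \<Rightarrow> nat \<Rightarrow> 's" where
  "mat_mult n A B i j = (\<Sum>k=1..n. A i k * B k j)"

definition mat_one :: "nat \<Rightarrow> nat \<Rightarrow> 's::{zero,one}" where
  "mat_one i j = (if i = j then 1 else 0)"

definition mat_list_prod :: "nat \<Rightarrow> (nat \<Rightarrow> nat \<Rightarrow> 's::{semiring_0,monoid_mult}) list \<Rightarrow> nat \<Rightarrow> nat \<Rightarrow> 's" where
  "mat_list_prod n As = foldr (mat_mult n) As mat_one"

text \<open>Gamma* x Gamma* matrices with n x n blocks: M pi1 pi2 i j = (M_{pi1,pi2})_{i,j}.\<close>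
definition bmat_mult :: "((U \<Rightarrow> 's::semiring_0) \<Rightarrow> U set \<Rightarrow> 's) \<Rightarrow> nat
    \<Rightarrow> ('g list \<Rightarrow> 'g list \<Rightarrow> nat \<Rightarrow> nat \<Rightarrow> 's) \<Rightarrow> ('g list \<Rightarrow> 'g list \<Rightarrow> nat \<Rightarrow> nat \<Rightarrow> 's)
    \<Rightarrow> 'g list \<Rightarrow> 'g list \<Rightarrow> nat \<Rightarrow> nat \<Rightarrow> 's" where
  "bmat_mult ssum n A B p1 p2 i j = gsum ssum (\<lambda>p. \<Sum>k=1..n. A p1 p i k * B p p2 k j) UNIV"

primrec bmat_pow :: "((U \<Rightarrow> 's::{semiring_0,monoid_mult}) \<Rightarrow> U set \<Rightarrow> 's) \<Rightarrow> nat
    \<Rightarrow> ('g list \<Rightarrow> 'g list \<Rightarrow> nat \<Rightarrow> nat \<Rightarrow> 's) \<Rightarrow> nat \<Rightarrow> 'g list \<Rightarrow> 'g list \<Rightarrow> nat \<Rightarrow> nat \<Rightarrow> 's" where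
  "bmat_pow ssum n M 0 = (\<lambda>p1 p2 i j. if p1 = p2 \<and> i = j then 1 else 0)"
| "bmat_pow ssum n M (Suc m) = bmat_mult ssum n (bmat_pow ssum n M m) M"

definition bmat_star :: "((U \<Rightarrow> 's::{semiring_0,monoid_mult}) \<Rightarrow> U set \<Rightarrow> 's) \<Rightarrow> nat
    \<Rightarrow> ('g list \<Rightarrow> 'g list \<Rightarrow> nat \<Rightarrow> nat \<Rightarrow> 's) \<Rightarrow> 'g list \<Rightarrow> 'g list \<Rightarrow> nat \<Rightarrow> nat \<Rightarrow> 's" where
  "bmat_star ssum n M p1 p2 i j = gsum ssum (\<lambda>m. bmat_pow ssum n M m p1 p2 i j) UNIV"

definition pushdown_matrix :: "nat \<Rightarrow> ('g list \<Rightarrow> 'g list \<Rightarrow> nat \<Rightarrow> nat \<Rightarrow> 's::zero) \<Rightarrow> bool" where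
  "pushdown_matrix n M \<longleftrightarrow>
     (\<forall>p. finite {pi. \<exists>i\<in>{1..n}. \<exists>j\<in>{1..n}. M [p] pi i j \<noteq> 0}) \<and>
     (\<forall>p pi pi'. \<forall>i\<in>{1..n}. \<forall>j\<in>{1..n}. M (p # pi') (pi @ pi') i j = M [p] pi i j) \<and>
     (\<forall>p1 p2. (\<nexists>p pi pi'. p1 = p # pi' \<and> p2 = pi @ pi') \<longrightarrow>
        (\<forall>i\<in>{1..n}. \<forall>j\<in>{1..n}. M p1 p2 i j = 0))"

text \<open>A_M: (A_M)_{p,p'} = sum over pi = p_1...p_k and positions with p_j = p' (here the
position is 0-based: j < length pi, pi!j = p') of M_{p,pi} (M^*)_{p_1,eps} ... (M^*)_{p_{j-1},eps}.\<close>
definition amat :: "((U \<Rightarrow> 's::{semiring_0,monoid_mult}) \<Rightarrow> U set \<Rightarrow> 's) \<Rightarrow> nat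
    \<Rightarrow> ('g list \<Rightarrow> 'g list \<Rightarrow> nat \<Rightarrow> nat \<Rightarrow> 's) \<Rightarrow> 'g \<Rightarrow> 'g \<Rightarrow> nat \<Rightarrow> nat \<Rightarrow> 's" where
  "amat ssum n M p p' i i' =
     gsum ssum (\<lambda>(pi, j). mat_mult n (M [p] pi)
                    (mat_list_prod n (map (\<lambda>q. bmat_star ssum n M [q] []) (take j pi))) i i')
       {(pi, j). j < length pi \<and> pi ! j = p'}"

text \<open>M^{omega,l}: sum over infinite paths (pi,i) -> sigma 0 -> sigma 1 -> ... in Gamma* x {1..n}
whose state components are <= l infinitely often, of the infinite product of edge weights.\<close>
definition path_weight :: "('g list \<Rightarrow> 'g list \<Rightarrow> nat \<Rightarrow> nat \<Rightarrow> 's)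
    \<Rightarrow> 'g list \<Rightarrow> nat \<Rightarrow> (nat \<Rightarrow> 'g list \<times> nat) \<Rightarrow> nat \<Rightarrow> 's" where
  "path_weight M pi i sigma t =
     (let a = (if t = 0 then (pi, i) else sigma (t - 1)); b = sigma t
      in M (fst a) (fst b) (snd a) (snd b))"

definition momega :: "((U \<Rightarrow> 'v) \<Rightarrow> U set \<Rightarrow> 'v) \<Rightarrow> ((nat \<Rightarrow> 's) \<Rightarrow> 'v) \<Rightarrow> nat
    \<Rightarrow> ('g list \<Rightarrow> 'g list \<Rightarrow> nat \<Rightarrow> nat \<Rightarrow> 's) \<Rightarrow> nat \<Rightarrow> 'g list \<Rightarrow> nat \<Rightarrow> 'v" where
  "momega vsum iprod n M l pi i =
     gsum vsum (\<lambda>sigma. iprod (path_weight M pi i sigma))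
       {sigma. (\<forall>t. snd (sigma t) \<in> {1..n}) \<and> infinite {t. snd (sigma t) \<le> l}}"

end

theory Submission
  imports Defs "HOL-Library.Countable"
begin


definition embT :: "'a itself \<Rightarrow> bool" where
  "embT (_ :: 'a itself) = (\<exists>e::'a \<Rightarrow> U. inj e)"

lemma embT_countable: "embT TYPE('a::countable)"
  unfolding embT_def by (rule exI[of _ "\<lambda>a (_::nat). to_nat a"]) (auto simp: inj_def fun_eq_iff)

lemma embT_seq: "embT TYPE(nat \<Rightarrow> 'a::countable)"
  unfolding embT_def by (rule exI[of _ "\<lambda>f t. to_nat (f t)"]) (auto simp: inj_def fun_eq_iff)

lemma embT_prod:
  assumes "embT TYPE('a)" "embT TYPE('b)" shows "embT TYPE('a \<times> 'b)"
proof -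
  obtain e1 :: "'a \<Rightarrow> U" where e1: "inj e1" using assms(1) unfolding embT_def by blast
  obtain e2 :: "'b \<Rightarrow> U" where e2: "inj e2" using assms(2) unfolding embT_def by blast
  define e where "e = (\<lambda>(a,b) k. if even k then e1 a (k div 2) else e2 b (k div 2))"
  have "inj e"
  proof (rule injI)
    fix x y assume h: "e x = e y"
    obtain a b where x: "x = (a,b)" by force
    obtain a' b' where y: "y = (a',b')" by force
    have "e1 a = e1 a'"
    proof
      fix k have "e x (2*k) = e y (2*k)" using h by simp
      thus "e1 a k = e1 a' k" by (simp add: e_def x y)
    qed
    moreover have "e2 b = e2 b'"
    proof
      fix k have "e x (2*k+1) = e y (2*k+1)" using h by simp
      thus "e2 b k = e2 b' k" by (simp add: e_def x y)
    qed
    ultimately show "x = y" using e1 e2 x y by (auto dest: injD)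
  qed
  thus ?thesis unfolding embT_def by blast
qed

lemma embT_inj_on: "embT TYPE('a) \<Longrightarrow> \<exists>e::'a \<Rightarrow> U. inj_on e I"
  unfolding embT_def by (auto intro: inj_on_subset)

context
  fixes Sm :: "(U \<Rightarrow> 'z::comm_monoid_add) \<Rightarrow> U set \<Rightarrow> 'z"
  assumes cs: "complete_sum Sm"
begin

lemmas csu = cs[unfolded complete_sum_def]

lemma Sm_cong: "(\<And>i. i \<in> I \<Longrightarrow> f i = g i) \<Longrightarrow> Sm f I = Sm g I"
  using csu[THEN conjunct1] by blast
lemma Sm_empty: "Sm f {} = 0"
  using csu[THEN conjunct2, THEN conjunct1] by blast
lemma Sm_single: "Sm f {i} = f i"
  using csu[THEN conjunct2, THEN conjunct2, THEN conjunct1] by blast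
lemma Sm_two: "i \<noteq> j \<Longrightarrow> Sm f {i,j} = f i + f j"
  using csu[THEN conjunct2, THEN conjunct2, THEN conjunct2, THEN conjunct1] by blast
lemma Sm_part: "(\<Union>j\<in>J. K j) = I \<Longrightarrow> (\<And>j j'. j \<in> J \<Longrightarrow> j' \<in> J \<Longrightarrow> j \<noteq> j' \<Longrightarrow> K j \<inter> K j' = {})
   \<Longrightarrow> Sm (\<lambda>j. Sm f (K j)) J = Sm f I"
  using csu[THEN conjunct2, THEN conjunct2, THEN conjunct2, THEN conjunct2] by blast

lemma gsum_inj:
  fixes e :: "'j \<Rightarrow> U"
  assumes e: "inj_on e I"
  shows "gsum Sm f I = Sm (\<lambda>u. f (inv_into I e u)) (e ` I)"
proof -
  define e0 where "e0 = (SOME e :: 'j \<Rightarrow> U. inj_on e I)"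
  have e0: "inj_on e0 I" unfolding e0_def by (rule someI[of "\<lambda>e. inj_on e I"]) (rule e)
  define g0 where "g0 = (\<lambda>u. f (inv_into I e0 u))"
  have "gsum Sm f I = Sm g0 (e0 ` I)" unfolding gsum_def e0_def g0_def Let_def by simp
  also have "\<dots> = Sm (\<lambda>u. Sm g0 {e0 (inv_into I e u)}) (e ` I)"
  proof (rule Sm_part[symmetric])
    show "(\<Union>j\<in>e ` I. {e0 (inv_into I e j)}) = e0 ` I"
      using e by (auto simp: inv_into_f_f image_iff)
    fix j j' assume "j \<in> e ` I" "j' \<in> e ` I" "j \<noteq> j'"
    thus "{e0 (inv_into I e j)} \<inter> {e0 (inv_into I e j')} = {}"
      using e e0 by (auto simp: inv_into_f_f inj_on_eq_iff)
  qed
  also have "\<dots> = Sm (\<lambda>u. f (inv_into I e u)) (e ` I)"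
    by (rule Sm_cong) (use e e0 in \<open>auto simp: Sm_single g0_def inv_into_f_f\<close>)
  finally show ?thesis .
qed

lemma gsum_cong: "(\<And>i. i \<in> I \<Longrightarrow> f i = g i) \<Longrightarrow> gsum Sm f I = gsum Sm g I"
  unfolding gsum_def Let_def by (rule Sm_cong) (metis imageE inv_into_into)

lemma gsum_empty: "gsum Sm f {} = 0"
  by (subst gsum_inj[of "\<lambda>_. undefined"]) (auto simp: Sm_empty)

lemma gsum_single: "gsum Sm f {a} = f a"
  by (subst gsum_inj[of "\<lambda>_. undefined"]) (auto simp: Sm_single inv_into_def)

lemma gsum_partition_inj:
  fixes e :: "'a \<Rightarrow> U" and d :: "'b \<Rightarrow> U" and K :: "'b \<Rightarrow> 'a set"
  assumes e: "inj_on e I" and d: "inj_on d J" and U: "(\<Union>j\<in>J. K j) = I"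
    and D: "\<And>j j'. j \<in> J \<Longrightarrow> j' \<in> J \<Longrightarrow> j \<noteq> j' \<Longrightarrow> K j \<inter> K j' = {}"
  shows "gsum Sm (\<lambda>j. gsum Sm f (K j)) J = gsum Sm f I"
proof -
  define g where "g = (\<lambda>u. f (inv_into I e u))"
  have sub: "K j \<subseteq> I" if "j \<in> J" for j using U that by blast
  have inner: "gsum Sm f (K j) = Sm g (e ` K j)" if "j \<in> J" for j
  proof -
    have ej: "inj_on e (K j)" using e sub[OF that] by (rule inj_on_subset)
    have "gsum Sm f (K j) = Sm (\<lambda>u. f (inv_into (K j) e u)) (e ` K j)" by (rule gsum_inj[OF ej])
    also have "\<dots> = Sm g (e ` K j)"
    proof (rule Sm_cong)
      fix u assume "u \<in> e ` K j"
      then obtain a where a: "a \<in> K j" "u = e a" by blast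
      thus "f (inv_into (K j) e u) = g u" using ej e sub[OF that] by (auto simp: g_def inv_into_f_f)
    qed
    finally show ?thesis .
  qed
  have "gsum Sm (\<lambda>j. gsum Sm f (K j)) J = gsum Sm (\<lambda>j. Sm g (e ` K j)) J"
    by (rule gsum_cong) (rule inner)
  also have "\<dots> = Sm (\<lambda>v. Sm g (e ` K (inv_into J d v))) (d ` J)" by (rule gsum_inj[OF d])
  also have "\<dots> = Sm g (e ` I)"
  proof (rule Sm_part)
    show "(\<Union>v\<in>d ` J. e ` K (inv_into J d v)) = e ` I"
      using d U by (auto simp: inv_into_f_f) 
    fix v v' assume "v \<in> d ` J" "v' \<in> d ` J" "v \<noteq> v'"
    then obtain j j' where jj: "j \<in> J" "j' \<in> J" "v = d j" "v' = d j'" "j \<noteq> j'" by blast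
    have "K j \<inter> K j' = {}" using D jj by blast
    thus "e ` K (inv_into J d v) \<inter> e ` K (inv_into J d v') = {}"
      using jj d e sub by (auto simp: inv_into_f_f inj_on_def) blast
  qed
  also have "\<dots> = gsum Sm f I" using gsum_inj[OF e] by (simp add: g_def)
  finally show ?thesis .
qed


lemma Sm_zero: "Sm (\<lambda>_. 0) J = 0"
proof -
  have "Sm (\<lambda>j. Sm (\<lambda>_. 0) {}) J = Sm (\<lambda>_. 0) {}" by (rule Sm_part) auto
  thus ?thesis by (simp add: Sm_empty)
qed

lemma gsum_zero: "(\<And>i. i \<in> I \<Longrightarrow> f i = 0) \<Longrightarrow> gsum Sm f I = 0"
proof -
  assume "\<And>i. i \<in> I \<Longrightarrow> f i = 0"
  hence "gsum Sm f I = gsum Sm (\<lambda>_. 0) I" by (rule gsum_cong)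
  also have "\<dots> = 0" unfolding gsum_def Let_def by (simp add: Sm_zero)
  finally show ?thesis .
qed

lemma gsum_partition:
  fixes K :: "'b \<Rightarrow> 'a set"
  assumes "embT TYPE('a)" "embT TYPE('b)" and U: "(\<Union>j\<in>J. K j) = I"
    and D: "\<And>j j'. j \<in> J \<Longrightarrow> j' \<in> J \<Longrightarrow> j \<noteq> j' \<Longrightarrow> K j \<inter> K j' = {}"
  shows "gsum Sm (\<lambda>j. gsum Sm f (K j)) J = gsum Sm f I"
proof -
  obtain e :: "'a \<Rightarrow> U" where e: "inj_on e I" using embT_inj_on[OF assms(1)] by blast
  obtain d :: "'b \<Rightarrow> U" where d: "inj_on d J" using embT_inj_on[OF assms(2)] by blast
  show ?thesis by (rule gsum_partition_inj[OF e d U D])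
qed

lemma gsum_reindex:
  fixes h :: "'b \<Rightarrow> 'a"
  assumes "embT TYPE('a)" "embT TYPE('b)" "inj_on h J" "h ` J = I"
  shows "gsum Sm f I = gsum Sm (\<lambda>j. f (h j)) J"
proof -
  have "gsum Sm (\<lambda>j. gsum Sm f {h j}) J = gsum Sm f I"
    by (rule gsum_partition[OF assms(1,2)]) (use assms(3,4) in \<open>auto simp: inj_on_def\<close>)
  thus ?thesis by (simp add: gsum_single)
qed

lemma gsum_bool: "gsum Sm g (UNIV::bool set) = g True + g False"
proof -
  have "gsum Sm g (UNIV::bool set) = Sm (\<lambda>u. g (inv_into UNIV (\<lambda>b (_::nat). if b then 0 else 1) u))
        ((\<lambda>b (_::nat). if b then 0 else 1) ` UNIV)"
    by (rule gsum_inj) (auto simp: inj_on_def fun_eq_iff)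
  also have "(\<lambda>b (_::nat). if b then (0::nat) else 1) ` UNIV = {\<lambda>_. 0, \<lambda>_. 1}"
    by (auto simp: UNIV_bool)
  also have "Sm (\<lambda>u. g (inv_into UNIV (\<lambda>b (_::nat). if b then 0 else 1) u)) {\<lambda>_. 0, \<lambda>_. 1} = g True + g False"
  proof -
    have i1: "inv_into UNIV (\<lambda>b (_::nat). if b then (0::nat) else 1) (\<lambda>_. 0) = True"
      by (rule inv_into_f_eq) (auto simp: inj_on_def fun_eq_iff)
    have i2: "inv_into UNIV (\<lambda>b (_::nat). if b then (0::nat) else 1) (\<lambda>_. 1) = False"
      by (rule inv_into_f_eq) (auto simp: inj_on_def fun_eq_iff)
    show ?thesis using i1 i2 by (subst Sm_two) (auto simp: fun_eq_iff)
  qed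
  finally show ?thesis .
qed

lemma gsum_split:
  assumes "embT TYPE('a)" "I = A \<union> B" "A \<inter> B = {}"
  shows "gsum Sm f (I :: 'a set) = gsum Sm f A + gsum Sm f B"
proof -
  have "gsum Sm (\<lambda>b. gsum Sm f (if b then A else B)) UNIV = gsum Sm f I"
    by (rule gsum_partition[OF assms(1) embT_countable]) (use assms in auto)
  thus ?thesis by (simp add: gsum_bool)
qed

lemma gsum_subset_zero:
  assumes "embT TYPE('a)" "A \<subseteq> I" "\<And>i. i \<in> I - A \<Longrightarrow> f i = 0"
  shows "gsum Sm f (I :: 'a set) = gsum Sm f A"
proof -
  have "gsum Sm f I = gsum Sm f A + gsum Sm f (I - A)"
    by (rule gsum_split) (use assms in auto)
  also have "gsum Sm f (I - A) = 0" by (rule gsum_zero) (use assms in auto)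
  finally show ?thesis by simp
qed

lemma gsum_finite:
  assumes "embT TYPE('a)" "finite I"
  shows "gsum Sm f (I :: 'a set) = sum f I"
  using assms(2)
proof (induction I rule: finite_induct)
  case empty thus ?case by (simp add: gsum_empty)
next
  case (insert x F)
  have "gsum Sm f (insert x F) = gsum Sm f {x} + gsum Sm f F"
    by (rule gsum_split[OF assms(1)]) (use insert in auto)
  thus ?case using insert by (simp add: gsum_single)
qed

lemma gsum_Sigma:
  fixes B :: "'a \<Rightarrow> 'b set"
  assumes "embT TYPE('a)" "embT TYPE('b)"
  shows "gsum Sm f (Sigma A B) = gsum Sm (\<lambda>a. gsum Sm (\<lambda>b. f (a,b)) (B a)) (A :: 'a set)"
proof -
  have "gsum Sm (\<lambda>a. gsum Sm f ({a} \<times> B a)) A = gsum Sm f (Sigma A B)"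
    by (rule gsum_partition[OF embT_prod[OF assms] assms(1), where K="\<lambda>a. {a} \<times> B a"]) auto
  moreover have "gsum Sm f ({a} \<times> B a) = gsum Sm (\<lambda>b. f (a,b)) (B a)" for a
    by (rule gsum_reindex[OF embT_prod[OF assms] assms(2)]) (auto simp: inj_on_def)
  ultimately show ?thesis by simp
qed

lemma gsum_swap:
  assumes "embT TYPE('a)" "embT TYPE('b)"
  shows "gsum Sm (\<lambda>a. gsum Sm (\<lambda>b. f a b) (B::'b set)) (A::'a set)
       = gsum Sm (\<lambda>b. gsum Sm (\<lambda>a. f a b) A) B"
proof -
  have "gsum Sm (\<lambda>a. gsum Sm (\<lambda>b. f a b) B) A = gsum Sm (\<lambda>(a,b). f a b) (A \<times> B)"
    by (subst gsum_Sigma[OF assms]) simp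
  also have "\<dots> = gsum Sm (\<lambda>j. (\<lambda>(a,b). f a b) ((\<lambda>(b,a). (a,b)) j)) (B \<times> A)"
    by (rule gsum_reindex[OF embT_prod[OF assms] embT_prod[OF assms(2,1)]]) (auto simp: inj_on_def)
  also have "\<dots> = gsum Sm (\<lambda>(b,a). f a b) (B \<times> A)"
    by (rule gsum_cong) auto
  also have "\<dots> = gsum Sm (\<lambda>b. gsum Sm (\<lambda>a. f a b) A) B"
    by (subst gsum_Sigma[OF assms(2,1)]) simp
  finally show ?thesis .
qed

lemma gsum_add:
  assumes "embT TYPE('a)"
  shows "gsum Sm (\<lambda>i. f i + g i) (I::'a set) = gsum Sm f I + gsum Sm g I"
proof -
  have "gsum Sm (\<lambda>i. gsum Sm (\<lambda>b. if b then f i else g i) UNIV) I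
      = gsum Sm (\<lambda>b. gsum Sm (\<lambda>i. if b then f i else g i) I) UNIV"
    by (rule gsum_swap[OF assms embT_countable])
  thus ?thesis by (simp add: gsum_bool)
qed

lemma gsum_sum:
  assumes "embT TYPE('a)" "finite K"
  shows "gsum Sm (\<lambda>i. \<Sum>k\<in>K. f i k) (I::'a set) = (\<Sum>k\<in>K. gsum Sm (\<lambda>i. f i k) I)"
  using assms(2)
proof (induction K rule: finite_induct)
  case empty thus ?case by (simp add: gsum_zero)
next
  case (insert x F)
  thus ?case by (simp add: gsum_add[OF assms(1)])
qed

end


locale pdm =
  fixes ssum :: "(U \<Rightarrow> 's::{semiring_0,monoid_mult}) \<Rightarrow> U set \<Rightarrow> 's"
    and act :: "'s \<Rightarrow> 'v::comm_monoid_add \<Rightarrow> 'v"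
    and vsum :: "(U \<Rightarrow> 'v) \<Rightarrow> U set \<Rightarrow> 'v"
    and iprod :: "(nat \<Rightarrow> 's) \<Rightarrow> 'v"
    and n l :: nat
    and M :: "'g::finite list \<Rightarrow> 'g list \<Rightarrow> nat \<Rightarrow> nat \<Rightarrow> 's"
  assumes css: "complete_ss_pair ssum act vsum iprod"
    and pdm: "pushdown_matrix n M"
begin

lemmas cssu = css[unfolded complete_ss_pair_def]

lemma cs_s: "complete_sum ssum" using cssu[THEN conjunct1] by blast
lemma cs_v: "complete_sum vsum" using cssu[THEN conjunct2, THEN conjunct2, THEN conjunct2, THEN conjunct2, THEN conjunct2, THEN conjunct2, THEN conjunct2, THEN conjunct2, THEN conjunct2, THEN conjunct1] by blast
lemma act_add1: "act (s1 + s2) v = act s1 v + act s2 v" using cssu[THEN conjunct2, THEN conjunct2, THEN conjunct2, THEN conjunct1] by blast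
lemma act_add2: "act s (v1 + v2) = act s v1 + act s v2" using cssu[THEN conjunct2, THEN conjunct2, THEN conjunct2, THEN conjunct2, THEN conjunct1] by blast
lemma act_mult: "act (s1 * s2) v = act s1 (act s2 v)" using cssu[THEN conjunct2, THEN conjunct2, THEN conjunct2, THEN conjunct2, THEN conjunct2, THEN conjunct1] by blast
lemma act_one[simp]: "act 1 v = v" using cssu[THEN conjunct2, THEN conjunct2, THEN conjunct2, THEN conjunct2, THEN conjunct2, THEN conjunct2, THEN conjunct1] by blast
lemma act_zero1[simp]: "act 0 v = 0" using cssu[THEN conjunct2, THEN conjunct2, THEN conjunct2, THEN conjunct2, THEN conjunct2, THEN conjunct2, THEN conjunct2, THEN conjunct1] by blast
lemma act_zero2[simp]: "act s 0 = 0" using cssu[THEN conjunct2, THEN conjunct2, THEN conjunct2, THEN conjunct2, THEN conjunct2, THEN conjunct2, THEN conjunct2, THEN conjunct2, THEN conjunct1] by blast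
lemma iprod_shift: "iprod s = act (s 0) (iprod (\<lambda>j. s (Suc j)))" using cssu[THEN conjunct2, THEN conjunct2, THEN conjunct2, THEN conjunct2, THEN conjunct2, THEN conjunct2, THEN conjunct2, THEN conjunct2, THEN conjunct2, THEN conjunct2, THEN conjunct2, THEN conjunct2, THEN conjunct1] by blast

lemma act_ssum: "act (gsum ssum f I) v = gsum vsum (\<lambda>i. act (f i) v) I"
proof -
  have "\<forall>f I v. act (ssum f I) v = vsum (\<lambda>i. act (f i) v) I" using cssu[THEN conjunct2, THEN conjunct2, THEN conjunct2, THEN conjunct2, THEN conjunct2, THEN conjunct2, THEN conjunct2, THEN conjunct2, THEN conjunct2, THEN conjunct2, THEN conjunct1] by blast
  thus ?thesis unfolding gsum_def Let_def by simp
qed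

lemma act_vsum: "act s (gsum vsum g I) = gsum vsum (\<lambda>i. act s (g i)) I"
proof -
  have "\<forall>s g I. act s (vsum g I) = vsum (\<lambda>i. act s (g i)) I" using cssu[THEN conjunct2, THEN conjunct2, THEN conjunct2, THEN conjunct2, THEN conjunct2, THEN conjunct2, THEN conjunct2, THEN conjunct2, THEN conjunct2, THEN conjunct2, THEN conjunct2, THEN conjunct1] by blast
  thus ?thesis unfolding gsum_def Let_def by simp
qed

lemma ssum_mult_right: "gsum ssum (\<lambda>i. f i * c) I = gsum ssum f I * c"
proof -
  have "\<forall>c f I. ssum (\<lambda>i. f i * c) I = ssum f I * c" using cssu[THEN conjunct2, THEN conjunct2, THEN conjunct1] by blast
  thus ?thesis unfolding gsum_def Let_def by simp
qed

lemma ssum_mult_left: "gsum ssum (\<lambda>i. c * f i) I = c * gsum ssum f I"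
proof -
  have "\<forall>c f I. ssum (\<lambda>i. c * f i) I = c * ssum f I" using cssu[THEN conjunct2, THEN conjunct1] by blast
  thus ?thesis unfolding gsum_def Let_def by simp
qed

lemma act_sum_left: "act (\<Sum>k\<in>K. f k) v = (\<Sum>k\<in>K. act (f k) v)"
  by (induction K rule: infinite_finite_induct) (auto simp: act_add1)

lemma act_sum_right: "act s (\<Sum>k\<in>K. g k) = (\<Sum>k\<in>K. act s (g k))"
  by (induction K rule: infinite_finite_induct) (auto simp: act_add2)

lemma iprod_prefix: "iprod s = act (prod_list (map s [0..<m])) (iprod (\<lambda>j. s (j + m)))"
proof (induction m arbitrary: s)
  case 0 thus ?case by simp
next
  case (Suc m)
  have "iprod s = act (s 0) (iprod (\<lambda>j. s (Suc j)))" by (rule iprod_shift)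
  also have "iprod (\<lambda>j. s (Suc j)) = act (prod_list (map (\<lambda>j. s (Suc j)) [0..<m])) (iprod (\<lambda>j. s (Suc (j + m))))"
    using Suc.IH[of "\<lambda>j. s (Suc j)"] by simp
  also have "prod_list (map s [0..<Suc m]) = s 0 * prod_list (map (\<lambda>j. s (Suc j)) [0..<m])"
    by (simp add: upt_conv_Cons map_Suc_upt[symmetric] comp_def del: upt_Suc)
  ultimately show ?case by (simp add: act_mult)
qed

lemma iprod_zero: "s t = 0 \<Longrightarrow> iprod s = 0"
proof -
  assume z: "s t = 0"
  have "prod_list (map s [0..<Suc t]) = 0" using z by (simp add: prod_list_zero_iff)
  thus ?thesis using iprod_prefix[of s "Suc t"] by simp
qed

lemma M_nil: "i \<in> {1..n} \<Longrightarrow> j \<in> {1..n} \<Longrightarrow> M [] v i j = 0"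
  using pdm unfolding pushdown_matrix_def by auto

lemma M_cons: "i \<in> {1..n} \<Longrightarrow> j \<in> {1..n} \<Longrightarrow> M (p # x) (\<pi> @ x) i j = M [p] \<pi> i j"
  using pdm unfolding pushdown_matrix_def by auto

lemma M_notok: "i \<in> {1..n} \<Longrightarrow> j \<in> {1..n} \<Longrightarrow> \<not> (\<exists>p x \<pi>. u = p # x \<and> v = \<pi> @ x) \<Longrightarrow> M u v i j = 0"
  using pdm unfolding pushdown_matrix_def by blast

lemma M_app:
  assumes "u \<noteq> []" "i \<in> {1..n}" "j \<in> {1..n}"
  shows "M (u @ w) (v @ w) i j = M u v i j"
proof -
  obtain p x where u: "u = p # x" using assms(1) by (cases u) auto
  show ?thesis
  proof (cases "\<exists>\<pi>. v = \<pi> @ x")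
    case True
    then obtain \<pi> where v: "v = \<pi> @ x" by blast
    have "M (u @ w) (v @ w) i j = M [p] \<pi> i j" using M_cons[OF assms(2,3), of p "x @ w" \<pi>] by (simp add: u v)
    also have "\<dots> = M u v i j" using M_cons[OF assms(2,3), of p x \<pi>] by (simp add: u v)
    finally show ?thesis .
  next
    case False
    have "M u v i j = 0" by (rule M_notok[OF assms(2,3)]) (use False u in auto)
    moreover have "M (u @ w) (v @ w) i j = 0"
    proof (rule M_notok[OF assms(2,3)])
      show "\<not> (\<exists>p' x' \<pi>. u @ w = p' # x' \<and> v @ w = \<pi> @ x')"
      proof
        assume "\<exists>p' x' \<pi>. u @ w = p' # x' \<and> v @ w = \<pi> @ x'"
        then obtain \<pi> where "v @ w = \<pi> @ x @ w" using u by auto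
        hence "v = \<pi> @ x" by simp
        thus False using False by blast
      qed
    qed
    ultimately show ?thesis by simp
  qed
qed

primrec fw :: "('g list \<times> nat) \<Rightarrow> ('g list \<times> nat) list \<Rightarrow> 's" where
  "fw a [] = 1"
| "fw a (b # xs) = M (fst a) (fst b) (snd a) (snd b) * fw b xs"

lemma fw_snoc: "fw a (xs @ [b]) = fw a xs * M (fst (last (a # xs))) (fst b) (snd (last (a # xs))) (snd b)"
  by (induction xs arbitrary: a) (auto simp: mult.assoc)

lemma fw_append: "fw a (xs @ ys) = fw a xs * fw (last (a # xs)) ys"
  by (induction xs arbitrary: a) (auto simp: mult.assoc)

lemma pw_prefix: "prod_list (map (path_weight M \<pi> i \<sigma>) [0..<m]) = fw (\<pi>, i) (map \<sigma> [0..<m])"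
proof (induction m)
  case 0 thus ?case by simp
next
  case (Suc m)
  have l: "last ((\<pi>, i) # map \<sigma> [0..<m]) = (if m = 0 then (\<pi>, i) else \<sigma> (m - 1))"
    by (cases m) (auto simp: last_map)
  have "prod_list (map (path_weight M \<pi> i \<sigma>) [0..<Suc m])
      = prod_list (map (path_weight M \<pi> i \<sigma>) [0..<m]) * path_weight M \<pi> i \<sigma> m" by simp
  also have "\<dots> = fw (\<pi>, i) (map \<sigma> [0..<m]) * path_weight M \<pi> i \<sigma> m" using Suc by simp
  also have "\<dots> = fw (\<pi>, i) (map \<sigma> [0..<m] @ [\<sigma> m])"
    unfolding fw_snoc l by (simp add: path_weight_def Let_def)
  finally show ?case by simp
qed

end


lemma inf_shift: "infinite {t. Q (Suc t)} \<longleftrightarrow> infinite {t::nat. Q t}"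
proof -
  have a: "{t. Q t} \<subseteq> insert 0 (Suc ` {t. Q (Suc t)})" by (auto, metis not0_implies_Suc imageI mem_Collect_eq)
  have b: "Suc ` {t. Q (Suc t)} \<subseteq> {t. Q t}" by auto
  show ?thesis
  proof
    assume "infinite {t. Q (Suc t)}"
    hence "infinite (Suc ` {t. Q (Suc t)})" using finite_imageD inj_Suc by (metis inj_on_subset subset_UNIV)
    thus "infinite {t. Q t}" using b finite_subset by blast
  next
    assume "infinite {t. Q t}"
    thus "infinite {t. Q (Suc t)}" using a finite_subset by blast
  qed
qed

lemma inf_shift_plus: "infinite {t. Q (t + m)} \<longleftrightarrow> infinite {t::nat. Q t}"
proof (induction m arbitrary: Q)
  case 0 thus ?case by simp
next
  case (Suc m)
  have "infinite {t. Q (t + Suc m)} \<longleftrightarrow> infinite {t. (\<lambda>s. Q (Suc s)) (t + m)}" by simp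
  also have "\<dots> \<longleftrightarrow> infinite {t. Q (Suc t)}" by (rule Suc.IH)
  also have "\<dots> \<longleftrightarrow> infinite {t. Q t}" by (rule inf_shift)
  finally show ?case .
qed

context pdm begin

definition Om :: "(nat \<Rightarrow> 'g list \<times> nat) set" where
  "Om = {\<sigma>. (\<forall>t. snd (\<sigma> t) \<in> {1..n}) \<and> infinite {t. snd (\<sigma> t) \<le> l}}"

abbreviation mo :: "'g list \<Rightarrow> nat \<Rightarrow> 'v" where
  "mo \<equiv> momega vsum iprod n M l"

lemma mo_def': "mo \<pi> i = gsum vsum (\<lambda>\<sigma>. iprod (path_weight M \<pi> i \<sigma>)) Om"
  unfolding momega_def Om_def by simp

lemmas eS = embT_seq[where 'a = "'g list \<times> nat"]
lemmas eC = embT_countable[where 'a = "'g list \<times> nat"]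
lemmas eCS = embT_prod[OF eC eS]

lemma pw_case0: "path_weight M \<pi> i (case_nat x \<tau>) 0 = M \<pi> (fst x) i (snd x)"
  by (simp add: path_weight_def)

lemma pw_caseSuc: "path_weight M \<pi> i (case_nat x \<tau>) (Suc t) = path_weight M (fst x) (snd x) \<tau> t"
  by (cases t) (simp_all add: path_weight_def)

lemma first_step:
  "mo \<pi> i = gsum vsum (\<lambda>x. act (M \<pi> (fst x) i (snd x)) (mo (fst x) (snd x))) (UNIV \<times> {1..n})"
proof -
  define h :: "('g list \<times> nat) \<times> (nat \<Rightarrow> 'g list \<times> nat) \<Rightarrow> (nat \<Rightarrow> 'g list \<times> nat)"
    where "h = (\<lambda>(x, \<tau>). case_nat x \<tau>)"
  have inj: "inj_on h (Sigma (UNIV \<times> {1..n}) (\<lambda>_. Om))"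
  proof (rule inj_onI)
    fix a b assume "h a = h b" "a \<in> Sigma (UNIV \<times> {1..n}) (\<lambda>_. Om)"
    then obtain x \<tau> y \<rho> where ab: "a = (x, \<tau>)" "b = (y, \<rho>)" "case_nat x \<tau> = case_nat y \<rho>"
      unfolding h_def by (cases a, cases b) auto
    have "x = y" using fun_cong[OF ab(3), of 0] by simp
    moreover have "\<tau> = \<rho>" using fun_cong[OF ab(3), of "Suc t" for t] by auto
    ultimately show "a = b" using ab by simp
  qed
  have img: "h ` (Sigma (UNIV \<times> {1..n}) (\<lambda>_. Om)) = Om"
  proof
    show "h ` (Sigma (UNIV \<times> {1..n}) (\<lambda>_. Om)) \<subseteq> Om"
    proof
      fix s assume "s \<in> h ` (Sigma (UNIV \<times> {1..n}) (\<lambda>_. Om))"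
      then obtain x \<tau> where s: "s = case_nat x \<tau>" "snd x \<in> {1..n}" "\<tau> \<in> Om" unfolding h_def by auto
      have "\<forall>t. snd (s t) \<in> {1..n}" using s unfolding Om_def by (auto split: nat.split)
      moreover have "infinite {t. snd (s t) \<le> l}"
        using s(3) inf_shift[of "\<lambda>t. snd (s t) \<le> l"] unfolding Om_def s(1) by simp
      ultimately show "s \<in> Om" unfolding Om_def by blast
    qed
  next
    show "Om \<subseteq> h ` (Sigma (UNIV \<times> {1..n}) (\<lambda>_. Om))"
    proof
      fix s assume s: "s \<in> Om"
      have "s = h (s 0, \<lambda>t. s (Suc t))" unfolding h_def by (auto simp: fun_eq_iff split: nat.split)
      moreover have "(\<lambda>t. s (Suc t)) \<in> Om"
        using s inf_shift[of "\<lambda>t. snd (s t) \<le> l"] unfolding Om_def by auto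
      moreover have "snd (s 0) \<in> {1..n}" using s unfolding Om_def by auto
      ultimately show "s \<in> h ` (Sigma (UNIV \<times> {1..n}) (\<lambda>_. Om))"
        by (intro image_eqI[where x="(s 0, \<lambda>t. s (Suc t))"]) (auto simp: mem_Times_iff)
    qed
  qed
  have "mo \<pi> i = gsum vsum (\<lambda>p. iprod (path_weight M \<pi> i (h p))) (Sigma (UNIV \<times> {1..n}) (\<lambda>_. Om))"
    unfolding mo_def' by (rule gsum_reindex[OF cs_v eS eCS inj img])
  also have "\<dots> = gsum vsum (\<lambda>x. gsum vsum (\<lambda>\<tau>. iprod (path_weight M \<pi> i (h (x, \<tau>)))) Om) (UNIV \<times> {1..n})"
    by (rule gsum_Sigma[OF cs_v eC eS])
  also have "\<dots> = gsum vsum (\<lambda>x. act (M \<pi> (fst x) i (snd x)) (mo (fst x) (snd x))) (UNIV \<times> {1..n})"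
  proof (rule gsum_cong[OF cs_v])
    fix x :: "'g list \<times> nat"
    have "iprod (path_weight M \<pi> i (h (x, \<tau>))) = act (M \<pi> (fst x) i (snd x)) (iprod (path_weight M (fst x) (snd x) \<tau>))" for \<tau>
      by (subst iprod_shift) (simp add: h_def pw_case0 pw_caseSuc)
    thus "gsum vsum (\<lambda>\<tau>. iprod (path_weight M \<pi> i (h (x, \<tau>)))) Om = act (M \<pi> (fst x) i (snd x)) (mo (fst x) (snd x))"
      by (simp add: mo_def' act_vsum)
  qed
  finally show ?thesis .
qed

lemma mo_nil: "i \<in> {1..n} \<Longrightarrow> mo [] i = 0"
  by (subst first_step) (rule gsum_zero[OF cs_v], auto simp: M_nil)

end


context pdm begin

lemmas eL = embT_countable[where 'a = "('g list \<times> nat) list"]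
lemmas eN = embT_countable[where 'a = nat]
lemmas eGL = embT_countable[where 'a = "'g list"]

lemma fw_zero:
  "t < length ys \<Longrightarrow> M (fst ((a#ys)!t)) (fst (ys!t)) (snd ((a#ys)!t)) (snd (ys!t)) = 0 \<Longrightarrow> fw a ys = 0"
proof (induction ys arbitrary: a t)
  case Nil thus ?case by simp
next
  case (Cons b ys)
  show ?case
  proof (cases t)
    case 0 thus ?thesis using Cons.prems by simp
  next
    case (Suc t')
    have "fw b ys = 0" using Cons.prems Suc by (intro Cons.IH[of t']) auto
    thus ?thesis by simp
  qed
qed

definition PS :: "nat \<Rightarrow> ('g list \<times> nat) list set" where
  "PS m = {ys. length ys = m \<and> (\<forall>y\<in>set ys. snd y \<in> {1..n})}"

lemma pow_paths:
  assumes "i \<in> {1..n}" "k \<in> {1..n}"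
  shows "gsum ssum (\<lambda>ys. fw (\<pi>1, i) (ys @ [(\<pi>2, k)])) (PS m) = bmat_pow ssum n M (Suc m) \<pi>1 \<pi>2 i k"
  using assms(2)
proof (induction m arbitrary: \<pi>2 k)
  case 0
  have "PS 0 = {[]}" by (auto simp: PS_def)
  hence l: "gsum ssum (\<lambda>ys. fw (\<pi>1, i) (ys @ [(\<pi>2, k)])) (PS 0) = M \<pi>1 \<pi>2 i k"
    by (simp add: gsum_single[OF cs_s])
  have "bmat_pow ssum n M (Suc 0) \<pi>1 \<pi>2 i k
      = gsum ssum (\<lambda>p. \<Sum>k'=1..n. (if \<pi>1 = p \<and> i = k' then 1 else 0) * M p \<pi>2 k' k) UNIV"
    by (simp add: bmat_mult_def)
  also have "\<dots> = gsum ssum (\<lambda>p. \<Sum>k'=1..n. (if \<pi>1 = p \<and> i = k' then 1 else 0) * M p \<pi>2 k' k) {\<pi>1}"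
    by (rule gsum_subset_zero[OF cs_s eGL]) auto
  also have "\<dots> = M \<pi>1 \<pi>2 i k"
    using assms(1) by (simp add: gsum_single[OF cs_s] if_distrib[of "\<lambda>x. x * _"] sum.delta cong: if_cong)
  finally show ?case using l by simp
next
  case (Suc m)
  define h :: "('g list \<times> nat) \<times> ('g list \<times> nat) list \<Rightarrow> ('g list \<times> nat) list"
    where "h = (\<lambda>(x, zs). zs @ [x])"
  have inj: "inj_on h (Sigma (UNIV \<times> {1..n}) (\<lambda>_. PS m))" unfolding h_def by (auto simp: inj_on_def)
  have img: "h ` (Sigma (UNIV \<times> {1..n}) (\<lambda>_. PS m)) = PS (Suc m)"
  proof
    show "h ` (Sigma (UNIV \<times> {1..n}) (\<lambda>_. PS m)) \<subseteq> PS (Suc m)"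
      unfolding h_def PS_def by auto
    show "PS (Suc m) \<subseteq> h ` (Sigma (UNIV \<times> {1..n}) (\<lambda>_. PS m))"
    proof
      fix ys assume ys: "ys \<in> PS (Suc m)"
      then obtain zs x where e: "ys = zs @ [x]" unfolding PS_def
        by (cases ys rule: rev_cases) auto
      show "ys \<in> h ` (Sigma (UNIV \<times> {1..n}) (\<lambda>_. PS m))"
        using ys unfolding e h_def PS_def by (intro image_eqI[where x="(x, zs)"]) (auto simp: mem_Times_iff)
    qed
  qed
  have "gsum ssum (\<lambda>ys. fw (\<pi>1, i) (ys @ [(\<pi>2, k)])) (PS (Suc m))
      = gsum ssum (\<lambda>p. fw (\<pi>1, i) (h p @ [(\<pi>2, k)])) (Sigma (UNIV \<times> {1..n}) (\<lambda>_. PS m))"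
    by (rule gsum_reindex[OF cs_s eL embT_prod[OF eC eL] inj img])
  also have "\<dots> = gsum ssum (\<lambda>x. gsum ssum (\<lambda>zs. fw (\<pi>1, i) (h (x, zs) @ [(\<pi>2, k)])) (PS m)) (UNIV \<times> {1..n})"
    by (rule gsum_Sigma[OF cs_s eC eL])
  also have "\<dots> = gsum ssum (\<lambda>x. bmat_pow ssum n M (Suc m) \<pi>1 (fst x) i (snd x) * M (fst x) \<pi>2 (snd x) k) (UNIV \<times> {1..n})"
  proof (rule gsum_cong[OF cs_s])
    fix x :: "'g list \<times> nat" assume x: "x \<in> UNIV \<times> {1..n}"
    have "fw (\<pi>1, i) (h (x, zs) @ [(\<pi>2, k)]) = fw (\<pi>1, i) (zs @ [(fst x, snd x)]) * M (fst x) \<pi>2 (snd x) k" for zs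
      using fw_snoc[of "(\<pi>1, i)" "zs @ [x]" "(\<pi>2, k)"] unfolding h_def by simp
    hence "gsum ssum (\<lambda>zs. fw (\<pi>1, i) (h (x, zs) @ [(\<pi>2, k)])) (PS m)
        = gsum ssum (\<lambda>zs. fw (\<pi>1, i) (zs @ [(fst x, snd x)])) (PS m) * M (fst x) \<pi>2 (snd x) k"
      by (simp add: ssum_mult_right)
    also have "\<dots> = bmat_pow ssum n M (Suc m) \<pi>1 (fst x) i (snd x) * M (fst x) \<pi>2 (snd x) k"
      using Suc.IH[of "snd x" "fst x"] x by auto
    finally show "gsum ssum (\<lambda>zs. fw (\<pi>1, i) (h (x, zs) @ [(\<pi>2, k)])) (PS m)
        = bmat_pow ssum n M (Suc m) \<pi>1 (fst x) i (snd x) * M (fst x) \<pi>2 (snd x) k" .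
  qed
  also have "\<dots> = gsum ssum (\<lambda>p. gsum ssum (\<lambda>k'. bmat_pow ssum n M (Suc m) \<pi>1 p i k' * M p \<pi>2 k' k) {1..n}) UNIV"
    by (subst gsum_Sigma[OF cs_s eGL eN]) simp
  also have "\<dots> = bmat_pow ssum n M (Suc (Suc m)) \<pi>1 \<pi>2 i k"
    by (simp add: bmat_mult_def gsum_finite[OF cs_s eN])
  finally show ?case .
qed

lemma star_Suc:
  "gsum ssum (\<lambda>m. bmat_pow ssum n M (Suc m) [q] [] i k) UNIV = bmat_star ssum n M [q] [] i k"
proof -
  have "bmat_star ssum n M [q] [] i k = gsum ssum (\<lambda>m. bmat_pow ssum n M m [q] [] i k) UNIV"
    by (simp add: bmat_star_def)
  also have "\<dots> = gsum ssum (\<lambda>m. bmat_pow ssum n M m [q] [] i k) {0} + gsum ssum (\<lambda>m. bmat_pow ssum n M m [q] [] i k) (range Suc)"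
    by (rule gsum_split[OF cs_s eN]) (use not0_implies_Suc in auto)
  also have "gsum ssum (\<lambda>m. bmat_pow ssum n M m [q] [] i k) {0} = 0"
    by (simp add: gsum_single[OF cs_s])
  also have "gsum ssum (\<lambda>m. bmat_pow ssum n M m [q] [] i k) (range Suc) = gsum ssum (\<lambda>m. bmat_pow ssum n M (Suc m) [q] [] i k) UNIV"
    by (rule gsum_reindex[OF cs_s eN eN]) auto
  finally show ?thesis by simp
qed

end


context pdm begin

lemma pw_unf: "path_weight M \<pi> i \<sigma> t =
   M (fst (if t = 0 then (\<pi>, i) else \<sigma> (t - 1))) (fst (\<sigma> t)) (snd (if t = 0 then (\<pi>, i) else \<sigma> (t - 1))) (snd (\<sigma> t))"
  by (simp add: path_weight_def Let_def)

lemma step_zero: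
  assumes "u \<noteq> []" "s1 \<in> {1..n}" "s2 \<in> {1..n}" "v \<noteq> w" "\<not> (\<exists>u'. u' \<noteq> [] \<and> v = u' @ w)"
  shows "M (u @ w) v s1 s2 = 0"
proof (rule M_notok[OF assms(2,3)])
  show "\<not> (\<exists>p x \<pi>. u @ w = p # x \<and> v = \<pi> @ x)"
  proof
    assume "\<exists>p x \<pi>. u @ w = p # x \<and> v = \<pi> @ x"
    then obtain p x \<pi> where h: "u @ w = p # x" "v = \<pi> @ x" by blast
    obtain u' where u: "u = p # u'" using h(1) assms(1) by (cases u) auto
    have "x = u' @ w" using h(1) u by simp
    hence "v = (\<pi> @ u') @ w" using h(2) by simp
    thus False using assms(4,5) by (cases "\<pi> @ u'") auto
  qed
qed

definition appw :: "'g list \<Rightarrow> 'g list \<times> nat \<Rightarrow> 'g list \<times> nat" where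
  "appw w a = (fst a @ w, snd a)"

lemma partA:
  assumes i: "i \<in> {1..n}"
  shows "gsum vsum (\<lambda>\<sigma>. iprod (path_weight M (q # w) i \<sigma>)) {\<sigma>\<in>Om. \<forall>t. fst (\<sigma> t) \<noteq> w} = mo [q] i"
proof -
  define A where "A = {\<sigma>\<in>Om. \<forall>t. fst (\<sigma> t) \<noteq> w}"
  define A' where "A' = {\<sigma>\<in>Om. \<forall>t. \<exists>u. u \<noteq> [] \<and> fst (\<sigma> t) = u @ w}"
  define O0 where "O0 = {\<sigma>\<in>Om. \<forall>t. fst (\<sigma> t) \<noteq> []}"
  have stOm: "snd (\<sigma> t) \<in> {1..n}" if "\<sigma> \<in> Om" for \<sigma> t using that unfolding Om_def by auto
  have a: "mo [q] i = gsum vsum (\<lambda>\<sigma>. iprod (path_weight M [q] i \<sigma>)) O0"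
    unfolding mo_def'
  proof (rule gsum_subset_zero[OF cs_v eS])
    show "O0 \<subseteq> Om" unfolding O0_def by auto
    fix \<sigma> assume "\<sigma> \<in> Om - O0"
    then obtain t where t: "fst (\<sigma> t) = []" "\<sigma> \<in> Om" unfolding O0_def by auto
    have "path_weight M [q] i \<sigma> (Suc t) = 0"
      unfolding pw_unf using t M_nil[OF stOm stOm] by simp
    thus "iprod (path_weight M [q] i \<sigma>) = 0" by (rule iprod_zero)
  qed
  have b: "gsum vsum (\<lambda>\<sigma>. iprod (path_weight M (q # w) i \<sigma>)) A = gsum vsum (\<lambda>\<sigma>. iprod (path_weight M (q # w) i \<sigma>)) A'"
  proof (rule gsum_subset_zero[OF cs_v eS])
    show "A' \<subseteq> A" unfolding A_def A'_def by auto
    fix \<sigma> assume s: "\<sigma> \<in> A - A'"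
    define P where "P = (\<lambda>t. \<not> (\<exists>u. u \<noteq> [] \<and> fst (\<sigma> t) = u @ w))"
    have "\<exists>t. P t" using s unfolding P_def A_def A'_def by auto
    then obtain t0 where t0: "P t0" "\<And>t. t < t0 \<Longrightarrow> \<not> P t" using exists_least_iff[of P] by blast
    have sO: "\<sigma> \<in> Om" "\<And>t. fst (\<sigma> t) \<noteq> w" using s unfolding A_def by auto
    obtain u where u: "u \<noteq> []" "fst (if t0 = 0 then (q # w, i) else \<sigma> (t0 - 1)) = u @ w"
    proof (cases t0)
      case 0 thus ?thesis using that[of "[q]"] by simp
    next
      case (Suc t')
      hence "\<not> P t'" using t0(2) by simp
      thus ?thesis using that Suc unfolding P_def by auto
    qed
    have st: "snd (if t0 = 0 then (q # w, i) else \<sigma> (t0 - 1)) \<in> {1..n}" using i stOm[OF sO(1)] by auto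
    have "path_weight M (q # w) i \<sigma> t0 = 0"
      unfolding pw_unf u(2) by (rule step_zero[OF u(1) st stOm[OF sO(1)] sO(2)]) (use t0(1) in \<open>simp add: P_def\<close>)
    thus "iprod (path_weight M (q # w) i \<sigma>) = 0" by (rule iprod_zero)
  qed
  define h :: "(nat \<Rightarrow> 'g list \<times> nat) \<Rightarrow> nat \<Rightarrow> 'g list \<times> nat" where "h = (\<lambda>\<sigma> t. appw w (\<sigma> t))"
  have inj: "inj_on h O0"
  proof (rule inj_onI)
    fix \<sigma> \<tau> assume "h \<sigma> = h \<tau>"
    hence "\<forall>t. fst (\<sigma> t) @ w = fst (\<tau> t) @ w \<and> snd (\<sigma> t) = snd (\<tau> t)"
      unfolding h_def appw_def by (metis fst_conv snd_conv)
    thus "\<sigma> = \<tau>" by (simp add: fun_eq_iff prod_eq_iff)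
  qed
  have img: "h ` O0 = A'"
  proof
    show "h ` O0 \<subseteq> A'"
    proof
      fix \<tau> assume "\<tau> \<in> h ` O0"
      then obtain \<sigma> where s: "\<sigma> \<in> O0" "\<tau> = h \<sigma>" by blast
      have "snd \<circ> \<tau> = snd \<circ> \<sigma>" using s(2) unfolding h_def appw_def by auto
      hence "\<tau> \<in> Om" using s(1) unfolding O0_def Om_def by (simp add: o_def fun_eq_iff)
      thus "\<tau> \<in> A'" using s unfolding A'_def O0_def h_def appw_def by auto
    qed
    show "A' \<subseteq> h ` O0"
    proof
      fix \<tau> assume t: "\<tau> \<in> A'"
      define \<sigma> where "\<sigma> = (\<lambda>t. (take (length (fst (\<tau> t)) - length w) (fst (\<tau> t)), snd (\<tau> t)))"
      have e: "\<exists>u. u \<noteq> [] \<and> fst (\<tau> t) = u @ w \<and> fst (\<sigma> t) = u" for t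
      proof -
        obtain u where "u \<noteq> []" "fst (\<tau> t) = u @ w" using t unfolding A'_def by blast
        thus ?thesis unfolding \<sigma>_def by auto
      qed
      have "h \<sigma> = \<tau>" unfolding h_def appw_def fun_eq_iff
        by (metis (no_types, lifting) e \<sigma>_def prod.collapse snd_conv)
      moreover have "\<sigma> \<in> O0"
      proof -
        have "snd \<circ> \<sigma> = snd \<circ> \<tau>" unfolding \<sigma>_def by auto
        hence "\<sigma> \<in> Om" using t unfolding A'_def Om_def by (simp add: o_def fun_eq_iff)
        thus ?thesis unfolding O0_def using e by blast
      qed
      ultimately show "\<tau> \<in> h ` O0" by blast
    qed
  qed
  have wt: "iprod (path_weight M (q # w) i (h \<sigma>)) = iprod (path_weight M [q] i \<sigma>)" if s: "\<sigma> \<in> O0" for \<sigma>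
  proof -
    have "path_weight M (q # w) i (h \<sigma>) t = path_weight M [q] i \<sigma> t" for t
    proof (cases t)
      case 0
      have "M ([q] @ w) (fst (\<sigma> 0) @ w) i (snd (\<sigma> 0)) = M [q] (fst (\<sigma> 0)) i (snd (\<sigma> 0))"
        by (rule M_app) (use i s stOm in \<open>auto simp: O0_def\<close>)
      thus ?thesis using 0 unfolding pw_unf h_def appw_def by simp
    next
      case (Suc t')
      have "M (fst (\<sigma> t') @ w) (fst (\<sigma> t) @ w) (snd (\<sigma> t')) (snd (\<sigma> t)) = M (fst (\<sigma> t')) (fst (\<sigma> t)) (snd (\<sigma> t')) (snd (\<sigma> t))"
        by (rule M_app) (use s stOm in \<open>auto simp: O0_def\<close>)
      thus ?thesis using Suc unfolding pw_unf h_def appw_def by simp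
    qed
    thus ?thesis by presburger
  qed
  have "gsum vsum (\<lambda>\<sigma>. iprod (path_weight M (q # w) i \<sigma>)) A' = gsum vsum (\<lambda>\<sigma>. iprod (path_weight M (q # w) i (h \<sigma>))) O0"
    by (rule gsum_reindex[OF cs_v eS eS inj img])
  also have "\<dots> = gsum vsum (\<lambda>\<sigma>. iprod (path_weight M [q] i \<sigma>)) O0"
    by (rule gsum_cong[OF cs_v]) (rule wt)
  finally show ?thesis using a b unfolding A_def by simp
qed

end


context pdm begin

lemma fw_app:
  "fst a \<noteq> [] \<Longrightarrow> (\<forall>y\<in>set (butlast zs). fst y \<noteq> []) \<Longrightarrow> snd a \<in> {1..n} \<Longrightarrow> (\<forall>y\<in>set zs. snd y \<in> {1..n})
   \<Longrightarrow> fw (appw w a) (map (appw w) zs) = fw a zs"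
proof (induction zs arbitrary: a)
  case Nil thus ?case by simp
next
  case (Cons b zs)
  have m: "M (fst a @ w) (fst b @ w) (snd a) (snd b) = M (fst a) (fst b) (snd a) (snd b)"
    by (rule M_app) (use Cons.prems in auto)
  show ?case
  proof (cases "zs = []")
    case True thus ?thesis using m by (simp add: appw_def[abs_def])
  next
    case False
    have "fw (appw w b) (map (appw w) zs) = fw b zs"
      by (rule Cons.IH) (use Cons.prems False in \<open>auto simp: butlast.simps split: if_splits\<close>)
    thus ?thesis using m by (simp add: appw_def[abs_def])
  qed
qed

definition FP :: "'g list \<Rightarrow> nat \<Rightarrow> ('g list \<times> nat) list set" where
  "FP w m = {xs. length xs = m \<and> (\<forall>x\<in>set xs. snd x \<in> {1..n} \<and> fst x \<noteq> w)}"

lemma FP_sum: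
  assumes i: "i \<in> {1..n}" and k: "k \<in> {1..n}"
  shows "gsum ssum (\<lambda>xs. fw (q # w, i) (xs @ [(w, k)])) (FP w m) = bmat_pow ssum n M (Suc m) [q] [] i k"
proof -
  define FP' where "FP' = {xs\<in>FP w m. \<forall>x\<in>set xs. \<exists>u. u \<noteq> [] \<and> fst x = u @ w}"
  define G where "G = {ys\<in>PS m. \<forall>y\<in>set ys. fst y \<noteq> []}"
  have s1: "gsum ssum (\<lambda>xs. fw (q # w, i) (xs @ [(w, k)])) (FP w m) = gsum ssum (\<lambda>xs. fw (q # w, i) (xs @ [(w, k)])) FP'"
  proof (rule gsum_subset_zero[OF cs_s eL])
    show "FP' \<subseteq> FP w m" unfolding FP'_def by auto
    fix xs assume xs: "xs \<in> FP w m - FP'"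
    have len: "length xs = m" and stx: "\<And>x. x \<in> set xs \<Longrightarrow> snd x \<in> {1..n} \<and> fst x \<noteq> w"
      using xs unfolding FP_def by auto
    define P where "P = (\<lambda>t. t < m \<and> \<not> (\<exists>u. u \<noteq> [] \<and> fst (xs ! t) = u @ w))"
    have "\<exists>t. P t" using xs len unfolding P_def FP'_def by (auto simp: in_set_conv_nth, metis fst_conv)
    then obtain t0 where t0: "P t0" "\<And>t. t < t0 \<Longrightarrow> \<not> P t" using exists_least_iff[of P] by blast
    have lt: "t0 < m" using t0(1) unfolding P_def by simp
    define prev where "prev = ((q # w, i) # xs @ [(w, k)]) ! t0"
    have prev_eq: "prev = (if t0 = 0 then (q # w, i) else xs ! (t0 - 1))"
      unfolding prev_def using lt len by (cases t0) (auto simp: nth_append)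
    obtain u where u: "u \<noteq> []" "fst prev = u @ w"
    proof (cases t0)
      case 0 thus ?thesis using that[of "[q]"] prev_eq by simp
    next
      case (Suc t')
      hence "\<not> P t'" using t0(2) by simp
      thus ?thesis using that Suc prev_eq lt unfolding P_def by auto
    qed
    have stp: "snd prev \<in> {1..n}" using prev_eq i stx lt len by (auto simp: nth_mem)
    have xt: "xs ! t0 \<in> set xs" using lt len by simp
    have e: "(xs @ [(w, k)]) ! t0 = xs ! t0" using lt len by (simp add: nth_append)
    have "M (u @ w) (fst (xs ! t0)) (snd prev) (snd (xs ! t0)) = 0"
      by (rule step_zero[OF u(1) stp]) (use stx[OF xt] t0(1) in \<open>auto simp: P_def\<close>)
    hence "M (fst prev) (fst ((xs @ [(w, k)]) ! t0)) (snd prev) (snd ((xs @ [(w, k)]) ! t0)) = 0"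
      unfolding e u(2) .
    thus "fw (q # w, i) (xs @ [(w, k)]) = 0"
      by (intro fw_zero[of t0]) (use lt len prev_def in auto)
  qed
  define h where "h = map (appw w)"
  have injw: "inj (appw w)" unfolding appw_def by (auto simp: inj_def prod_eq_iff)
  have inj: "inj_on h G" unfolding h_def using injw by (auto simp: inj_on_def inj_map_eq_map)
  have img: "h ` G = FP'"
  proof
    show "h ` G \<subseteq> FP'"
    proof
      fix xs assume "xs \<in> h ` G"
      then obtain ys where ys: "ys \<in> G" "xs = map (appw w) ys" unfolding h_def by (rule imageE)
      have "\<forall>x\<in>set xs. (snd x \<in> {1..n} \<and> fst x \<noteq> w) \<and> (\<exists>u. u \<noteq> [] \<and> fst x = u @ w)"
      proof
        fix x assume "x \<in> set xs"
        hence "x \<in> appw w ` set ys" using ys(2) by simp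
        then obtain y where y: "y \<in> set ys" "x = appw w y" by (rule imageE)
        have "fst y \<noteq> []" "snd y \<in> {1..n}" using ys(1) y(1) unfolding G_def PS_def by auto
        moreover have "fst x = fst y @ w" "snd x = snd y" using y(2) unfolding appw_def by auto
        ultimately show "(snd x \<in> {1..n} \<and> fst x \<noteq> w) \<and> (\<exists>u. u \<noteq> [] \<and> fst x = u @ w)"
          by simp
      qed
      moreover have "length xs = m" using ys unfolding G_def PS_def by auto
      ultimately show "xs \<in> FP'" unfolding FP'_def FP_def mem_Collect_eq ball_conj_distrib by simp
    qed
    show "FP' \<subseteq> h ` G"
    proof
      fix xs assume xs: "xs \<in> FP'"
      define g where "g = (\<lambda>x::'g list \<times> nat. (take (length (fst x) - length w) (fst x), snd x))"
      have ge: "appw w (g x) = x \<and> fst (g x) \<noteq> [] \<and> snd (g x) = snd x" if "x \<in> set xs" for x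
      proof -
        have "\<exists>u. u \<noteq> [] \<and> fst x = u @ w" using xs that unfolding FP'_def by simp
        then obtain u where u: "u \<noteq> []" "fst x = u @ w" by blast
        have "fst (g x) = u" unfolding g_def using u by simp
        thus ?thesis using u unfolding appw_def g_def by (simp add: prod_eq_iff)
      qed
      have "h (map g xs) = xs" unfolding h_def map_map
        by (rule map_idI) (simp add: ge)
      moreover have "map g xs \<in> G"
      proof -
        have "length xs = m" "\<forall>x\<in>set xs. snd x \<in> {1..n}" using xs unfolding FP'_def FP_def by auto
        thus ?thesis using ge unfolding G_def PS_def by auto
      qed
      ultimately show "xs \<in> h ` G" by (metis imageI)
    qed
  qed
  have s2: "gsum ssum (\<lambda>xs. fw (q # w, i) (xs @ [(w, k)])) FP' = gsum ssum (\<lambda>ys. fw ([q], i) (ys @ [([], k)])) G"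
  proof -
    have "gsum ssum (\<lambda>xs. fw (q # w, i) (xs @ [(w, k)])) FP' = gsum ssum (\<lambda>ys. fw (q # w, i) (h ys @ [(w, k)])) G"
      by (rule gsum_reindex[OF cs_s eL eL inj img])
    also have "\<dots> = gsum ssum (\<lambda>ys. fw ([q], i) (ys @ [([], k)])) G"
    proof (rule gsum_cong[OF cs_s])
      fix ys assume ys: "ys \<in> G"
      have "fw (appw w ([q], i)) (map (appw w) (ys @ [([], k)])) = fw ([q], i) (ys @ [([], k)])"
        by (rule fw_app) (use ys i k in \<open>auto simp: G_def PS_def\<close>)
      thus "fw (q # w, i) (h ys @ [(w, k)]) = fw ([q], i) (ys @ [([], k)])"
        by (simp add: h_def appw_def)
    qed
    finally show ?thesis .
  qed
  have s3: "gsum ssum (\<lambda>ys. fw ([q], i) (ys @ [([], k)])) G = gsum ssum (\<lambda>ys. fw ([q], i) (ys @ [([], k)])) (PS m)"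
  proof (rule gsum_subset_zero[OF cs_s eL, symmetric])
    show "G \<subseteq> PS m" unfolding G_def by auto
    fix ys assume ys: "ys \<in> PS m - G"
    then obtain t where t: "t < m" "fst (ys ! t) = []" and len: "length ys = m"
      and st: "\<And>y. y \<in> set ys \<Longrightarrow> snd y \<in> {1..n}"
      unfolding G_def PS_def by (auto simp: in_set_conv_nth)
    have st1: "snd (ys ! t) \<in> {1..n}" using st t len by (simp add: nth_mem)
    have st2: "snd ((ys @ [([], k)]) ! Suc t) \<in> {1..n}"
      using st k t len by (cases "Suc t < m") (auto simp: nth_append nth_mem)
    show "fw ([q], i) (ys @ [([], k)]) = 0"
    proof (rule fw_zero[of "Suc t"])
      show "Suc t < length (ys @ [([], k)])" using t len by simp
      have "(([q], i) # ys @ [([], k)]) ! Suc t = ys ! t" using t len by (simp add: nth_append)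
      thus "M (fst ((([q], i) # ys @ [([], k)]) ! Suc t)) (fst ((ys @ [([], k)]) ! Suc t))
             (snd ((([q], i) # ys @ [([], k)]) ! Suc t)) (snd ((ys @ [([], k)]) ! Suc t)) = 0"
        using M_nil[OF st1 st2] t(2) by simp
    qed
  qed
  show ?thesis using s1 s2 s3 pow_paths[OF i k, of "[q]" "[]" m] by simp
qed

end


context pdm begin

lemmas eD = embT_prod[OF eN embT_prod[OF eL eS]]

lemma partB:
  assumes i: "i \<in> {1..n}"
  shows "gsum vsum (\<lambda>\<sigma>. iprod (path_weight M (q # w) i \<sigma>)) {\<sigma>\<in>Om. fst (\<sigma> m) = w \<and> (\<forall>t<m. fst (\<sigma> t) \<noteq> w)}
       = (\<Sum>k=1..n. act (bmat_pow ssum n M (Suc m) [q] [] i k) (mo w k))"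
proof -
  define Bm where "Bm = {\<sigma>\<in>Om. fst (\<sigma> m) = w \<and> (\<forall>t<m. fst (\<sigma> t) \<noteq> w)}"
  define g :: "nat \<times> (('g list \<times> nat) list \<times> (nat \<Rightarrow> 'g list \<times> nat)) \<Rightarrow> nat \<Rightarrow> 'g list \<times> nat"
    where "g = (\<lambda>(k, xs, \<tau>) t. if t < m then xs ! t else if t = m then (w, k) else \<tau> (t - Suc m))"
  define D where "D = Sigma {1..n} (\<lambda>_. FP w m \<times> Om)"
  have stOm: "snd (\<sigma> t) \<in> {1..n}" if "\<sigma> \<in> Om" for \<sigma> t using that unfolding Om_def by auto
  have g1: "g (k, xs, \<tau>) (t + Suc m) = \<tau> t" for k xs \<tau> t by (simp add: g_def)
  have g2: "g (k, xs, \<tau>) m = (w, k)" for k xs \<tau> by (simp add: g_def)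
  have g3: "t < m \<Longrightarrow> g (k, xs, \<tau>) t = xs ! t" for k xs \<tau> t by (simp add: g_def)
  have inj: "inj_on g D"
  proof (rule inj_onI)
    fix a b assume a: "a \<in> D" and b: "b \<in> D" and e: "g a = g b"
    obtain k xs \<tau> where a': "a = (k, xs, \<tau>)" by (cases a) auto
    obtain k' xs' \<tau>' where b': "b = (k', xs', \<tau>')" by (cases b) auto
    have "k = k'" using fun_cong[OF e, of m] a' b' g2 by simp
    moreover have "xs = xs'"
    proof (rule nth_equalityI)
      show l: "length xs = length xs'" using a b a' b' unfolding D_def FP_def by simp
      fix t assume "t < length xs"
      hence "t < m" using a a' unfolding D_def FP_def by simp
      thus "xs ! t = xs' ! t" using fun_cong[OF e, of t] a' b' g3 by simp
    qed
    moreover have "\<tau> = \<tau>'"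
    proof
      fix t show "\<tau> t = \<tau>' t" using fun_cong[OF e, of "t + Suc m"] a' b' g1 by simp
    qed
    ultimately show "a = b" using a' b' by simp
  qed
  have img: "g ` D = Bm"
  proof
    show "g ` D \<subseteq> Bm"
    proof
      fix \<sigma> assume "\<sigma> \<in> g ` D"
      then obtain a where a: "a \<in> D" "\<sigma> = g a" by (rule imageE)
      obtain k xs \<tau> where a': "a = (k, xs, \<tau>)" by (cases a) auto
      have k: "k \<in> {1..n}" and xs: "xs \<in> FP w m" and \<tau>: "\<tau> \<in> Om" using a a' unfolding D_def by auto
      have len: "length xs = m" and xst: "\<And>x. x \<in> set xs \<Longrightarrow> snd x \<in> {1..n} \<and> fst x \<noteq> w"
        using xs unfolding FP_def by auto
      have st: "snd (\<sigma> t) \<in> {1..n}" for t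
      proof -
        consider "t < m" | "t = m" | "m < t" by linarith
        thus ?thesis
        proof cases
          case 1 thus ?thesis using a(2) a' g3 xst[of "xs ! t"] len by (simp add: nth_mem)
        next
          case 2 thus ?thesis using a(2) a' g2 k by simp
        next
          case 3
          hence "\<sigma> t = \<tau> (t - Suc m)" using a(2) a' g_def by simp
          thus ?thesis using stOm[OF \<tau>] by simp
        qed
      qed
      have sh: "\<sigma> (t + Suc m) = \<tau> t" for t using a(2) a' g1 by simp
      have "infinite {t. snd (\<sigma> (t + Suc m)) \<le> l}" using \<tau> unfolding sh Om_def by simp
      hence inf: "infinite {t. snd (\<sigma> t) \<le> l}" using inf_shift_plus[of "\<lambda>t. snd (\<sigma> t) \<le> l" "Suc m"] by simp
      have "fst (\<sigma> m) = w" using a(2) a' g2 by simp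
      moreover have "\<forall>t<m. fst (\<sigma> t) \<noteq> w" using a(2) a' g3 xst len by (auto simp: nth_mem)
      ultimately show "\<sigma> \<in> Bm" unfolding Bm_def Om_def using st inf by simp
    qed
    show "Bm \<subseteq> g ` D"
    proof
      fix \<sigma> assume s: "\<sigma> \<in> Bm"
      have sO: "\<sigma> \<in> Om" and fm: "fst (\<sigma> m) = w" and bt: "\<And>t. t < m \<Longrightarrow> fst (\<sigma> t) \<noteq> w"
        using s unfolding Bm_def by auto
      define a where "a = (snd (\<sigma> m), map \<sigma> [0..<m], \<lambda>t. \<sigma> (t + Suc m))"
      have "map \<sigma> [0..<m] \<in> FP w m"
      proof -
        have "\<forall>x\<in>set (map \<sigma> [0..<m]). snd x \<in> {1..n} \<and> fst x \<noteq> w"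
          using stOm[OF sO] bt by auto
        thus ?thesis unfolding FP_def by simp
      qed
      moreover have "(\<lambda>t. \<sigma> (t + Suc m)) \<in> Om"
      proof -
        have "infinite {t. snd (\<sigma> (t + Suc m)) \<le> l}"
          using sO inf_shift_plus[of "\<lambda>t. snd (\<sigma> t) \<le> l" "Suc m"] unfolding Om_def by simp
        thus ?thesis using stOm[OF sO] unfolding Om_def by simp
      qed
      ultimately have "a \<in> D" unfolding a_def D_def using stOm[OF sO] by simp
      moreover have "g a = \<sigma>"
      proof
        fix t
        consider "t < m" | "t = m" | "m < t" by linarith
        thus "g a t = \<sigma> t"
        proof cases
          case 1 thus ?thesis unfolding a_def g_def by simp
        next
          case 2 thus ?thesis unfolding a_def g_def using fm by (simp add: prod_eq_iff)
        next
          case 3 thus ?thesis unfolding a_def g_def by simp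
        qed
      qed
      ultimately show "\<sigma> \<in> g ` D" by (metis imageI)
    qed
  qed
  have wt: "iprod (path_weight M (q # w) i (g a)) = act (fw (q # w, i) (fst (snd a) @ [(w, fst a)])) (iprod (path_weight M w (fst a) (snd (snd a))))"
    if a: "a \<in> D" for a
  proof -
    obtain k xs \<tau> where a': "a = (k, xs, \<tau>)" by (cases a) auto
    have len: "length xs = m" using a a' unfolding D_def FP_def by simp
    define \<sigma> where "\<sigma> = g a"
    have ms: "map \<sigma> [0..<Suc m] = xs @ [(w, k)]"
    proof (rule nth_equalityI)
      show "length (map \<sigma> [0..<Suc m]) = length (xs @ [(w, k)])" using len by simp
      fix t assume "t < length (map \<sigma> [0..<Suc m])"
      hence t: "t < Suc m" by simp
      show "map \<sigma> [0..<Suc m] ! t = (xs @ [(w, k)]) ! t"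
        using t len unfolding \<sigma>_def a' g_def by (simp add: nth_append)
    qed
    have tl: "(\<lambda>j. path_weight M (q # w) i \<sigma> (j + Suc m)) = path_weight M w k \<tau>"
    proof
      fix j show "path_weight M (q # w) i \<sigma> (j + Suc m) = path_weight M w k \<tau> j"
        unfolding pw_unf \<sigma>_def a' g_def by (cases j) auto
    qed
    have "iprod (path_weight M (q # w) i \<sigma>) = act (prod_list (map (path_weight M (q # w) i \<sigma>) [0..<Suc m]))
          (iprod (\<lambda>j. path_weight M (q # w) i \<sigma> (j + Suc m)))" by (rule iprod_prefix)
    also have "\<dots> = act (fw (q # w, i) (xs @ [(w, k)])) (iprod (path_weight M w k \<tau>))"
      unfolding pw_prefix ms tl ..
    finally show ?thesis unfolding \<sigma>_def a' by simp
  qed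
  have "gsum vsum (\<lambda>\<sigma>. iprod (path_weight M (q # w) i \<sigma>)) Bm = gsum vsum (\<lambda>a. iprod (path_weight M (q # w) i (g a))) D"
    by (rule gsum_reindex[OF cs_v eS eD inj img])
  also have "\<dots> = gsum vsum (\<lambda>a. act (fw (q # w, i) (fst (snd a) @ [(w, fst a)])) (iprod (path_weight M w (fst a) (snd (snd a))))) D"
    by (rule gsum_cong[OF cs_v]) (rule wt)
  also have "\<dots> = gsum vsum (\<lambda>k. gsum vsum (\<lambda>p. act (fw (q # w, i) (fst p @ [(w, k)])) (iprod (path_weight M w k (snd p)))) (FP w m \<times> Om)) {1..n}"
    unfolding D_def by (subst gsum_Sigma[OF cs_v eN embT_prod[OF eL eS]]) simp
  also have "\<dots> = (\<Sum>k=1..n. gsum vsum (\<lambda>p. act (fw (q # w, i) (fst p @ [(w, k)])) (iprod (path_weight M w k (snd p)))) (FP w m \<times> Om))"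
    by (rule gsum_finite[OF cs_v eN]) simp
  also have "\<dots> = (\<Sum>k=1..n. act (bmat_pow ssum n M (Suc m) [q] [] i k) (mo w k))"
  proof (rule sum.cong[OF refl])
    fix k assume k: "k \<in> {1..n}"
    have "gsum vsum (\<lambda>p. act (fw (q # w, i) (fst p @ [(w, k)])) (iprod (path_weight M w k (snd p)))) (FP w m \<times> Om)
        = gsum vsum (\<lambda>xs. gsum vsum (\<lambda>\<tau>. act (fw (q # w, i) (xs @ [(w, k)])) (iprod (path_weight M w k \<tau>))) Om) (FP w m)"
      by (subst gsum_Sigma[OF cs_v eL eS]) simp
    also have "\<dots> = gsum vsum (\<lambda>xs. act (fw (q # w, i) (xs @ [(w, k)])) (mo w k)) (FP w m)"
      by (simp add: mo_def' act_vsum)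
    also have "\<dots> = act (gsum ssum (\<lambda>xs. fw (q # w, i) (xs @ [(w, k)])) (FP w m)) (mo w k)"
      by (simp add: act_ssum)
    also have "\<dots> = act (bmat_pow ssum n M (Suc m) [q] [] i k) (mo w k)"
      by (simp add: FP_sum[OF i k])
    finally show "gsum vsum (\<lambda>p. act (fw (q # w, i) (fst p @ [(w, k)])) (iprod (path_weight M w k (snd p)))) (FP w m \<times> Om)
        = act (bmat_pow ssum n M (Suc m) [q] [] i k) (mo w k)" .
  qed
  finally show ?thesis unfolding Bm_def .
qed

end


context pdm begin

lemma key:
  assumes i: "i \<in> {1..n}"
  shows "mo (q # w) i = mo [q] i + (\<Sum>k=1..n. act (bmat_star ssum n M [q] [] i k) (mo w k))"
proof -
  define W where "W = (\<lambda>\<sigma>. iprod (path_weight M (q # w) i \<sigma>))"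
  define A where "A = {\<sigma>\<in>Om. \<forall>t. fst (\<sigma> t) \<noteq> w}"
  define Bu where "Bu = {\<sigma>\<in>Om. \<exists>t. fst (\<sigma> t) = w}"
  define Bm where "Bm = (\<lambda>m. {\<sigma>\<in>Om. fst (\<sigma> m) = w \<and> (\<forall>t<m. fst (\<sigma> t) \<noteq> w)})"
  have "mo (q # w) i = gsum vsum W A + gsum vsum W Bu"
    unfolding mo_def' W_def[symmetric] by (rule gsum_split[OF cs_v eS]) (auto simp: A_def Bu_def)
  also have "gsum vsum W A = mo [q] i" unfolding W_def A_def by (rule partA[OF i])
  also have "gsum vsum W Bu = gsum vsum (\<lambda>m. gsum vsum W (Bm m)) UNIV"
  proof (rule gsum_partition[OF cs_v eS eN, symmetric])
    show "(\<Union>m\<in>UNIV. Bm m) = Bu"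
    proof
      show "(\<Union>m\<in>UNIV. Bm m) \<subseteq> Bu" unfolding Bm_def Bu_def by blast
      show "Bu \<subseteq> (\<Union>m\<in>UNIV. Bm m)"
      proof
        fix \<sigma> assume s: "\<sigma> \<in> Bu"
        hence "\<exists>t. fst (\<sigma> t) = w" unfolding Bu_def by simp
        then obtain m where "fst (\<sigma> m) = w" "\<And>t. t < m \<Longrightarrow> fst (\<sigma> t) \<noteq> w"
          using exists_least_iff[of "\<lambda>t. fst (\<sigma> t) = w"] by blast
        hence "\<sigma> \<in> Bm m" using s unfolding Bm_def Bu_def by simp
        thus "\<sigma> \<in> (\<Union>m\<in>UNIV. Bm m)" by blast
      qed
    qed
    fix m m' :: nat assume "m \<noteq> m'"
    hence "m < m' \<or> m' < m" by linarith
    thus "Bm m \<inter> Bm m' = {}" unfolding Bm_def by auto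
  qed
  also have "\<dots> = gsum vsum (\<lambda>m. \<Sum>k=1..n. act (bmat_pow ssum n M (Suc m) [q] [] i k) (mo w k)) UNIV"
    unfolding W_def Bm_def by (rule gsum_cong[OF cs_v]) (rule partB[OF i])
  also have "\<dots> = (\<Sum>k=1..n. gsum vsum (\<lambda>m. act (bmat_pow ssum n M (Suc m) [q] [] i k) (mo w k)) UNIV)"
    by (rule gsum_sum[OF cs_v eN]) simp
  also have "\<dots> = (\<Sum>k=1..n. act (bmat_star ssum n M [q] [] i k) (mo w k))"
    by (rule sum.cong[OF refl]) (simp only: act_ssum[symmetric] star_Suc)
  finally show ?thesis .
qed

abbreviation LL :: "'g list \<Rightarrow> nat \<Rightarrow> nat \<Rightarrow> nat \<Rightarrow> 's" where
  "LL \<pi> j \<equiv> mat_list_prod n (map (\<lambda>q. bmat_star ssum n M [q] []) (take j \<pi>))"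

lemma level:
  "i \<in> {1..n} \<Longrightarrow> mo \<pi> i = (\<Sum>j<length \<pi>. \<Sum>k=1..n. act (LL \<pi> j i k) (mo [\<pi> ! j] k))"
proof (induction \<pi> arbitrary: i)
  case Nil thus ?case by (simp add: mo_nil)
next
  case (Cons q w)
  define S where "S = bmat_star ssum n M [q] []"
  have "(\<Sum>j<length (q # w). \<Sum>k=1..n. act (LL (q # w) j i k) (mo [(q # w) ! j] k))
      = (\<Sum>k=1..n. act (LL (q # w) 0 i k) (mo [q] k))
        + (\<Sum>j<length w. \<Sum>k=1..n. act (LL (q # w) (Suc j) i k) (mo [w ! j] k))"
    unfolding length_Cons sum.lessThan_Suc_shift by simp
  also have "(\<Sum>k=1..n. act (LL (q # w) 0 i k) (mo [q] k)) = mo [q] i"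
    using Cons.prems by (simp add: mat_list_prod_def mat_one_def if_distrib[of "\<lambda>x. act x _"] sum.delta cong: if_cong)
  also have "(\<Sum>j<length w. \<Sum>k=1..n. act (LL (q # w) (Suc j) i k) (mo [w ! j] k))
      = (\<Sum>j<length w. \<Sum>k=1..n. \<Sum>k'=1..n. act (S i k') (act (LL w j k' k) (mo [w ! j] k)))"
    by (simp add: mat_list_prod_def mat_mult_def S_def act_sum_left act_mult)
  also have "\<dots> = (\<Sum>j<length w. \<Sum>k'=1..n. \<Sum>k=1..n. act (S i k') (act (LL w j k' k) (mo [w ! j] k)))"
    by (rule sum.cong[OF refl], rule sum.swap)
  also have "\<dots> = (\<Sum>k'=1..n. \<Sum>j<length w. \<Sum>k=1..n. act (S i k') (act (LL w j k' k) (mo [w ! j] k)))"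
    by (rule sum.swap)
  also have "\<dots> = (\<Sum>k'=1..n. act (S i k') (\<Sum>j<length w. \<Sum>k=1..n. act (LL w j k' k) (mo [w ! j] k)))"
    by (simp add: act_sum_right)
  also have "\<dots> = (\<Sum>k'=1..n. act (S i k') (mo w k'))"
    by (rule sum.cong[OF refl]) (simp add: Cons.IH)
  also have "mo [q] i + \<dots> = mo (q # w) i" unfolding S_def by (rule key[OF Cons.prems, symmetric])
  finally show ?case ..
qed

lemma final:
  assumes i: "i \<in> {1..n}"
  shows "mo [p] i = (\<Sum>p'\<in>UNIV. \<Sum>k=1..n. act (amat ssum n M p p' i k) (mo [p'] k))"
proof -
  define X where "X = (\<lambda>\<pi> j k k'. act (M [p] \<pi> i k') (act (LL \<pi> j k' k) (mo [\<pi> ! j] k)))"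
  define Y where "Y = (\<lambda>x::'g list \<times> nat. \<Sum>k=1..n. \<Sum>k'=1..n. X (fst x) (snd x) k k')"
  define T where "T = (\<lambda>p'::'g. {(\<pi>, j). j < length \<pi> \<and> \<pi> ! j = p'})"
  have L: "mo [p] i = gsum vsum (\<lambda>\<pi>. \<Sum>j<length \<pi>. Y (\<pi>, j)) UNIV"
  proof -
    have "mo [p] i = gsum vsum (\<lambda>x. act (M [p] (fst x) i (snd x)) (mo (fst x) (snd x))) (UNIV \<times> {1..n})"
      by (rule first_step)
    also have "\<dots> = gsum vsum (\<lambda>\<pi>. gsum vsum (\<lambda>k'. act (M [p] \<pi> i k') (mo \<pi> k')) {1..n}) UNIV"
      by (subst gsum_Sigma[OF cs_v eGL eN]) simp
    also have "\<dots> = gsum vsum (\<lambda>\<pi>. \<Sum>j<length \<pi>. Y (\<pi>, j)) UNIV"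
    proof (rule gsum_cong[OF cs_v])
      fix \<pi> :: "'g list"
      have "gsum vsum (\<lambda>k'. act (M [p] \<pi> i k') (mo \<pi> k')) {1..n} = (\<Sum>k'=1..n. act (M [p] \<pi> i k') (mo \<pi> k'))"
        by (rule gsum_finite[OF cs_v eN]) simp
      also have "\<dots> = (\<Sum>k'=1..n. \<Sum>j<length \<pi>. \<Sum>k=1..n. X \<pi> j k k')"
        by (rule sum.cong[OF refl]) (simp add: level X_def act_sum_right)
      also have "\<dots> = (\<Sum>j<length \<pi>. \<Sum>k'=1..n. \<Sum>k=1..n. X \<pi> j k k')"
        by (rule sum.swap)
      also have "\<dots> = (\<Sum>j<length \<pi>. Y (\<pi>, j))"
        unfolding Y_def by (rule sum.cong[OF refl], simp, rule sum.swap)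
      finally show "gsum vsum (\<lambda>k'. act (M [p] \<pi> i k') (mo \<pi> k')) {1..n} = (\<Sum>j<length \<pi>. Y (\<pi>, j))" .
    qed
    finally show ?thesis .
  qed
  have A: "act (amat ssum n M p p' i k) (mo [p'] k) = gsum vsum (\<lambda>x. \<Sum>k'=1..n. X (fst x) (snd x) k k') (T p')" for p' k
  proof -
    have "act (amat ssum n M p p' i k) (mo [p'] k)
        = gsum vsum (\<lambda>x. act ((\<lambda>(\<pi>, j). mat_mult n (M [p] \<pi>) (LL \<pi> j) i k) x) (mo [p'] k)) (T p')"
      unfolding amat_def T_def by (rule act_ssum)
    also have "\<dots> = gsum vsum (\<lambda>x. \<Sum>k'=1..n. X (fst x) (snd x) k k') (T p')"
    proof (rule gsum_cong[OF cs_v])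
      fix x assume "x \<in> T p'"
      then obtain \<pi> j where x: "x = (\<pi>, j)" "\<pi> ! j = p'" unfolding T_def by auto
      show "act ((\<lambda>(\<pi>, j). mat_mult n (M [p] \<pi>) (LL \<pi> j) i k) x) (mo [p'] k) = (\<Sum>k'=1..n. X (fst x) (snd x) k k')"
        unfolding x(1) X_def using x(2) by (simp add: mat_mult_def act_sum_left act_mult)
    qed
    finally show ?thesis .
  qed
  have "(\<Sum>p'\<in>UNIV. \<Sum>k=1..n. act (amat ssum n M p p' i k) (mo [p'] k))
      = (\<Sum>p'\<in>UNIV. \<Sum>k=1..n. gsum vsum (\<lambda>x. \<Sum>k'=1..n. X (fst x) (snd x) k k') (T p'))"
    by (simp add: A)
  also have "\<dots> = (\<Sum>p'\<in>UNIV. gsum vsum Y (T p'))"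
    unfolding Y_def by (rule sum.cong[OF refl], rule gsum_sum[OF cs_v eC, symmetric]) simp
  also have "\<dots> = gsum vsum (\<lambda>p'. gsum vsum Y (T p')) UNIV"
    by (rule gsum_finite[OF cs_v embT_countable, symmetric]) simp
  also have "\<dots> = gsum vsum Y {(\<pi>, j). j < length \<pi>}"
    by (rule gsum_partition[OF cs_v eC embT_countable]) (auto simp: T_def)
  also have "{(\<pi>, j). j < length \<pi>} = Sigma UNIV (\<lambda>\<pi>::'g list. {..<length \<pi>})" by auto
  also have "gsum vsum Y (Sigma UNIV (\<lambda>\<pi>::'g list. {..<length \<pi>})) = gsum vsum (\<lambda>\<pi>. gsum vsum (\<lambda>j. Y (\<pi>, j)) {..<length \<pi>}) UNIV"
    by (rule gsum_Sigma[OF cs_v eGL eN])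
  also have "\<dots> = gsum vsum (\<lambda>\<pi>. \<Sum>j<length \<pi>. Y (\<pi>, j)) UNIV"
    by (rule gsum_cong[OF cs_v], rule gsum_finite[OF cs_v eN]) simp
  finally show ?thesis using L by simp
qed

end

theorem theorem8:
  fixes ssum :: "(U \<Rightarrow> 's::{semiring_0,monoid_mult}) \<Rightarrow> U set \<Rightarrow> 's"
    and act :: "'s \<Rightarrow> 'v::comm_monoid_add \<Rightarrow> 'v"
    and vsum :: "(U \<Rightarrow> 'v) \<Rightarrow> U set \<Rightarrow> 'v"
    and iprod :: "(nat \<Rightarrow> 's) \<Rightarrow> 'v"
    and S' :: "'s set"
    and n l :: nat
    and M :: "'g::finite list \<Rightarrow> 'g list \<Rightarrow> nat \<Rightarrow> nat \<Rightarrow> 's"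
  assumes "complete_ss_pair ssum act vsum iprod"
    and "0 \<in> S'" and "1 \<in> S'"
    and "n \<ge> 1"
    and "\<forall>p1 p2. \<forall>i\<in>{1..n}. \<forall>j\<in>{1..n}. M p1 p2 i j \<in> S'"
    and "pushdown_matrix n M"
    and "l \<le> n"
  shows "\<forall>p. \<forall>i\<in>{1..n}. momega vsum iprod n M l [p] i =
           (\<Sum>p'\<in>UNIV. \<Sum>k=1..n. act (amat ssum n M p p' i k) (momega vsum iprod n M l [p'] k))"
proof -
  interpret pdm ssum act vsum iprod n l M using assms(1) assms(6) by unfold_locales
  show ?thesis using final by blast
qed

end
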